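(* Let $\alpha>0$, $n\ge1$ an integer, $d\nu(r)=r^{n-1}e^{-1/r^{\alpha}}dr$ on $(0,\infty)$, and let $c,c'>0$, $v_0\in(0,1)$ be constants such that the function $$J(v)=\begin{cases}c\,v\big(\log\frac1v\big)^{1+\frac1\alpha}, & 0\le v\le v_0,\\ c'\,v^{\frac{n-1}{n}}, & v>v_0\end{cases}$$ (with $J(0)=0$) is a lower isoperimetric function for $\nu$ and is concave, increasing and continuous on $(0,\infty)$. Then there exists a constant $C_J>0$ such that $C_J\,J(ab)\le bJ(a)+aJ(b)$ for all $a,b\ge0$.
   Context: For a Borel set $A\subset(0,\infty)$, $\nu^+(A)=\liminf_{r\to0^+}\frac{\nu(A^r)-\nu(A)}{r}$, where $A^r$ is the $r$-neighborhood of $A$; $J$ is a lower isoperimetric function for $\nu$ if $\nu^+(A)\ge J(\nu(A))$ for all Borel $A$. (Such constants $c,c',v_0$ exist.) *)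

theory Defs
  imports "HOL-Analysis.Analysis"
begin

definition nu_meas :: "real \<Rightarrow> nat \<Rightarrow> real measure" where
  "nu_meas \<alpha> n = density lborel
     (\<lambda>r. ennreal (indicator {0<..} r * r ^ (n - 1) * exp (- 1 / (r powr \<alpha>))))"

definition nbhd :: "real set \<Rightarrow> real \<Rightarrow> real set" where
  "nbhd A r = {x. \<exists>a\<in>A. dist x a < r}"

definition boundary_measure :: "real measure \<Rightarrow> real set \<Rightarrow> ennreal" where
  "boundary_measure \<nu> A =
     Liminf (at_right 0) (\<lambda>r. (emeasure \<nu> (nbhd A r) - emeasure \<nu> A) * ennreal (1 / r))"

text \<open>J is a lower isoperimetric function for nu: nu^+(A) >= J(nu(A)) for all Borel
  A in (0,infinity) (of finite measure, so that J(nu(A)) makes sense).\<close>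
definition lower_isoperimetric :: "real measure \<Rightarrow> (real \<Rightarrow> real) \<Rightarrow> bool" where
  "lower_isoperimetric \<nu> J \<longleftrightarrow>
     (\<forall>A. A \<in> sets borel \<and> A \<subseteq> {0<..} \<and> emeasure \<nu> A < \<infinity> \<longrightarrow>
          boundary_measure \<nu> A \<ge> ennreal (J (measure \<nu> A)))"

definition J_fun :: "real \<Rightarrow> nat \<Rightarrow> real \<Rightarrow> real \<Rightarrow> real \<Rightarrow> real \<Rightarrow> real" where
  "J_fun \<alpha> n c c' v0 v =
     (if v \<le> v0 then (if v = 0 then 0 else c * v * (ln (1 / v)) powr (1 + 1 / \<alpha>))
      else c' * v powr ((real n - 1) / real n))"

end

theory Submission
  imports Defs
begin

locale GG =
  fixes c c' v0 p q :: real
  assumes c: "c > 0" and c': "c' > 0" and v0: "0 < v0" "v0 < 1" and p: "p \<ge> 1" and q: "q > 0" "q \<le> 1"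
begin

definition G :: "real \<Rightarrow> real" where
  "G v = (if v \<le> v0 then c * ln (1/v) powr p else c' * v powr (-q))"

definition L where "L = ln (1/v0)"
definition M where "M = max (c * L powr p) (c' * v0 powr (-q))"
definition m where "m = min (c * L powr p) c'"

lemma L_pos: "L > 0" using v0 by (simp add: L_def ln_div)

lemma m_pos: "m > 0" using L_pos c c' by (simp add: m_def)

lemma m_le_M: "m \<le> M" by (simp add: m_def M_def)

lemma MM: "M / m \<ge> 1" using m_le_M m_pos by simp

lemma G_nonneg: "v > 0 \<Longrightarrow> G v \<ge> 0" using c c' by (simp add: G_def)

lemma G_lower: assumes "0 < v" "v \<le> 1" shows "G v \<ge> m"
proof (cases "v \<le> v0")
  case True
  have "ln (1/v0) \<le> ln (1/v)" using assms True v0 by (simp add: ln_div)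
  hence "L powr p \<le> ln (1/v) powr p" using L_pos p by (simp add: L_def powr_mono2)
  hence "c * L powr p \<le> c * ln (1/v) powr p" using c by simp
  thus ?thesis using True by (simp add: G_def m_def min_le_iff_disj)
next
  case False
  have "v powr q \<le> 1" "v powr q > 0" using assms q by (auto intro: powr_le1)
  hence "v powr (-q) \<ge> 1" using assms by (simp add: powr_minus one_le_inverse)
  hence "c' \<le> c' * v powr (-q)" using c' by simp
  thus ?thesis using False by (simp add: G_def m_def)
qed

lemma G_upper: assumes "v > v0" shows "G v \<le> M"
proof -
  have "v powr (-q) \<le> v0 powr (-q)" using assms v0 q
    by (intro powr_mono2') auto
  hence "c' * v powr (-q) \<le> c' * v0 powr (-q)" using c' by simp
  thus ?thesis using assms by (simp add: G_def M_def)
qed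

lemma lnp_le: assumes "0 < a" "a < 1" shows "c * ln (1/a) powr p \<le> (M/m) * G a"
proof (cases "a \<le> v0")
  case True
  have e: "G a = c * ln (1/a) powr p" using True by (simp add: G_def)
  have "1 * G a \<le> (M/m) * G a" using MM G_nonneg[of a] assms by (intro mult_right_mono) auto
  then show ?thesis using e by simp
next
  case False
  have "ln (1/a) \<le> L" using False assms v0 by (simp add: L_def ln_div)
  moreover have "ln (1/a) \<ge> 0" using assms by (simp add: ln_div)
  ultimately have "ln (1/a) powr p \<le> L powr p" using p by (simp add: powr_mono2)
  hence "c * ln (1/a) powr p \<le> M" using c unfolding M_def
    by (meson le_max_iff_disj mult_le_cancel_left_pos)
  also have "M \<le> (M/m) * G a"
  proof -
    have "M/m \<ge> 0" using MM by simp
    hence "(M/m) * m \<le> (M/m) * G a" using G_lower[of a] assms by (intro mult_left_mono) auto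
    thus ?thesis using m_pos by simp
  qed
  finally show ?thesis .
qed

lemma le_K: "(x::real) \<ge> 0 \<Longrightarrow> K \<ge> 1 \<Longrightarrow> x \<le> K * x"
  using mult_right_mono[of 1 K x] by simp

lemma key: assumes "a > 0" "b > 0"
  shows "G (a*b) \<le> (2 powr p * (M/m)) * (G a + G b)"
proof -
  define K where "K = 2 powr p * (M/m)"
  have K1: "K \<ge> M/m" unfolding K_def using MM p
    using le_K[of "M/m" "2 powr p"] ge_one_powr_ge_zero[of 2 p] MM by (simp add: mult.commute)
  have Kpos: "K \<ge> 1" using K1 MM by simp
  have Ga: "G a \<ge> 0" and Gb: "G b \<ge> 0" using G_nonneg assms by auto
  have ab: "a*b > 0" using assms by simp
  have "G (a*b) \<le> K * (G a + G b)"
  proof (cases "a*b > v0")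
    case True
    show ?thesis
    proof (cases "a \<le> 1 \<or> b \<le> 1")
      case True
      have "G (a*b) \<le> M" using G_upper \<open>a*b > v0\<close> by simp
      also have "M \<le> (M/m) * (G a + G b)"
      proof -
        have "m \<le> G a + G b" using True
        proof
          assume "a \<le> 1" thus ?thesis using G_lower[of a] Gb assms by simp
        next
          assume "b \<le> 1" thus ?thesis using G_lower[of b] Ga assms by simp
        qed
        hence "(M/m) * m \<le> (M/m) * (G a + G b)" using MM by (intro mult_left_mono) auto
        thus ?thesis using m_pos by simp
      qed
      also have "\<dots> \<le> K * (G a + G b)" using K1 Ga Gb by (intro mult_right_mono) auto
      finally show ?thesis .
    next
      case False
      hence a1: "a \<ge> 1" "b \<ge> 1" by auto
      have "(a*b) powr (-q) \<le> a powr (-q)" using a1 q by (intro powr_mono2') auto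
      hence "G (a*b) \<le> G a" using True a1 v0 c' by (simp add: G_def)
      also have "\<dots> \<le> K * (G a + G b)" using Kpos Ga Gb
        using le_K[of "G a + G b" K] by simp
      finally show ?thesis .
    qed
  next
    case False
    hence Gab: "G (a*b) = c * (ln (1/a) + ln (1/b)) powr p"
      using assms by (simp add: G_def ln_div ln_mult)
    show ?thesis
    proof (cases "a \<ge> 1 \<or> b \<ge> 1")
      case True
      then show ?thesis
      proof
        assume a1: "a \<ge> 1"
        have bv: "b \<le> v0" using False a1 assms
        proof -
          have "1*b \<le> a*b" using mult_right_mono[of 1 a b] a1 assms by simp
          thus ?thesis using False by simp
        qed
        have "ln (1/b) \<ge> ln (1/v0)" using bv assms by (simp add: ln_div)
        have "0 \<le> ln (1/a) + ln (1/b)"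
        proof -
          have "ln (1/a) + ln (1/b) = ln (1/(a*b))" using assms by (simp add: ln_div ln_mult)
          moreover have "a*b \<le> 1" using False v0 by simp
          ultimately show ?thesis using assms by (simp add: ln_div)
        qed
        moreover have "ln (1/a) + ln (1/b) \<le> ln (1/b)" using a1 by (simp add: ln_div)
        ultimately have "G (a*b) \<le> G b" using Gab bv c p by (simp add: G_def powr_mono2)
        also have "\<dots> \<le> K * (G a + G b)" using Kpos Ga Gb
          using le_K[of "G a + G b" K] by simp
        finally show ?thesis .
      next
        assume b1: "b \<ge> 1"
        have av: "a \<le> v0" using False b1 assms
        proof -
          have "a*1 \<le> a*b" using mult_left_mono[of 1 b a] b1 assms by simp
          thus ?thesis using False by simp
        qed
        have "ln (1/a) \<ge> ln (1/v0)" using av assms by (simp add: ln_div)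
        have "0 \<le> ln (1/a) + ln (1/b)"
        proof -
          have "ln (1/a) + ln (1/b) = ln (1/(a*b))" using assms by (simp add: ln_div ln_mult)
          moreover have "a*b \<le> 1" using False v0 by simp
          ultimately show ?thesis using assms by (simp add: ln_div)
        qed
        moreover have "ln (1/a) + ln (1/b) \<le> ln (1/a)" using b1 by (simp add: ln_div)
        ultimately have "G (a*b) \<le> G a" using Gab av c p by (simp add: G_def powr_mono2)
        also have "\<dots> \<le> K * (G a + G b)" using Kpos Ga Gb
          using le_K[of "G a + G b" K] by simp
        finally show ?thesis .
      qed
    next
      case False
      hence a1: "a < 1" "b < 1" by auto
      define x where "x = ln (1/a)"
      define y where "y = ln (1/b)"
      have x0: "x \<ge> 0" "y \<ge> 0" using a1 assms by (auto simp: x_def y_def ln_div)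
      have "(x+y) powr p \<le> (2 * max x y) powr p" using x0 p by (intro powr_mono2) auto
      also have "\<dots> = 2 powr p * max x y powr p" using x0 by (simp add: powr_mult)
      also have "\<dots> \<le> 2 powr p * (x powr p + y powr p)"
        by (intro mult_left_mono) (auto simp: max_def)
      finally have "c * (x+y) powr p \<le> c * (2 powr p * (x powr p + y powr p))"
        using c by (intro mult_left_mono) auto
      hence 1: "c * (x+y) powr p \<le> 2 powr p * (c * x powr p + c * y powr p)"
        by (simp add: algebra_simps)
      have "c * x powr p + c * y powr p \<le> (M/m) * G a + (M/m) * G b"
        using lnp_le[of a] lnp_le[of b] a1 assms x_def y_def by (intro add_mono) auto
      hence "2 powr p * (c * x powr p + c * y powr p) \<le> 2 powr p * ((M/m) * (G a + G b))"
        by (intro mult_left_mono) (auto simp: algebra_simps)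
      moreover have "G (a*b) = c * (x+y) powr p" using Gab x_def y_def by simp
      ultimately have "G (a*b) \<le> 2 powr p * ((M/m) * (G a + G b))" using 1 by linarith
      thus ?thesis unfolding K_def by (simp only: mult.assoc)
    qed
  qed
  thus ?thesis by (simp add: K_def)
qed

end

theorem proposition3p3:
  fixes \<alpha> c c' v0 :: real and n :: nat
  assumes "\<alpha> > 0" and "n \<ge> 1"
    and "c > 0" and "c' > 0" and "0 < v0" and "v0 < 1"
    and "lower_isoperimetric (nu_meas \<alpha> n) (J_fun \<alpha> n c c' v0)"
    and "concave_on {0<..} (J_fun \<alpha> n c c' v0)"
    and "mono_on {0<..} (J_fun \<alpha> n c c' v0)"
    and "continuous_on {0<..} (J_fun \<alpha> n c c' v0)"
  shows "\<exists>C>0. \<forall>a b::real. a \<ge> 0 \<longrightarrow> b \<ge> 0 \<longrightarrow>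
           C * J_fun \<alpha> n c c' v0 (a * b) \<le> b * J_fun \<alpha> n c c' v0 a + a * J_fun \<alpha> n c c' v0 b"
proof -
  define p where "p = 1 + 1/\<alpha>"
  define q where "q = 1 / real n"
  interpret GG c c' v0 p q
    using assms by unfold_locales (auto simp: p_def q_def)
  let ?J = "J_fun \<alpha> n c c' v0"
  have JG: "?J v = v * G v" if "v > 0" for v
  proof (cases "v \<le> v0")
    case True thus ?thesis unfolding G_def using that by (simp add: J_fun_def p_def)
  next
    case False
    have e: "(real n - 1) / real n = 1 + (- q)" using assms(2) by (simp add: q_def field_simps)
    have "v powr ((real n - 1) / real n) = v * v powr (-q)"
      unfolding e using that powr_add[of v 1 "-q"] by simp
    thus ?thesis using False by (simp add: J_fun_def G_def)
  qed
  have J0: "?J 0 = 0" using assms by (simp add: J_fun_def)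
  define K where "K = 2 powr p * (M/m)"
  have Kpos: "K > 0" unfolding K_def using MM by (intro mult_pos_pos) auto
  show ?thesis
  proof (intro exI[of _ "1/K"] conjI allI impI)
    show "1/K > 0" using Kpos by simp
    fix a b :: real assume a: "a \<ge> 0" and b: "b \<ge> 0"
    show "1/K * ?J (a*b) \<le> b * ?J a + a * ?J b"
    proof (cases "a = 0 \<or> b = 0")
      case True thus ?thesis using J0 by auto
    next
      case False
      hence ap: "a > 0" and bp: "b > 0" using a b by auto
      have "G (a*b) \<le> K * (G a + G b)" using key[OF ap bp] K_def by simp
      hence "G (a*b) / K \<le> G a + G b" using Kpos by (simp add: divide_le_eq mult.commute)
      hence "(a*b) * (G (a*b) / K) \<le> (a*b) * (G a + G b)" using ap bp by (intro mult_left_mono) auto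
      thus ?thesis using JG[of "a*b"] JG[of a] JG[of b] ap bp by (simp add: algebra_simps)
    qed
  qed
qed

end
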